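(* Let $c>0$ and $C>0$ be constants, $\theta=c/n$, $p\le Cn\log n$, and let $X$ be an $n\times p$ Bernoulli–subgaussian random matrix with parameter $\theta$. Then the probability that $X$ has three distinct columns that are aligned is $o(1)$ as $n\to\infty$.
   Context: An $n\times p$ Bernoulli–subgaussian random matrix with parameter $\theta\in(0,1]$ is a matrix $X=(x_{ij})$ with iid entries $x_{ij}=\chi_{ij}\xi_{ij}$, where the $\chi_{ij}$ are iid indicator random variables with $\mathbb{P}(\chi_{ij}=1)=\theta$, the $\xi_{ij}$ are iid random variables independent of the $\chi$'s, with mean $0$, variance at most $1$, $\mathbb{E}|\xi_{ij}|\in[1/10,1]$, and $\mathbb{P}(|\xi_{ij}|\ge t)\le 2\exp(-t^2/2)$ for all $t>0$. A set of columns is called aligned if each of them has more than one nonzero entry and their nonzero entries occur in exactly the same positions (identical supports). *)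

theory Defs
  imports "HOL-Probability.Probability"
begin

definition subgaussian_law :: "real measure \<Rightarrow> bool" where
  "subgaussian_law \<mu> \<longleftrightarrow>
     prob_space \<mu> \<and> sets \<mu> = sets borel \<and>
     integrable \<mu> (\<lambda>x. x) \<and> (\<integral>x. x \<partial>\<mu>) = 0 \<and>
     integrable \<mu> (\<lambda>x. x\<^sup>2) \<and> (\<integral>x. (x - (\<integral>y. y \<partial>\<mu>))\<^sup>2 \<partial>\<mu>) \<le> 1 \<and>
     1/10 \<le> (\<integral>x. \<bar>x\<bar> \<partial>\<mu>) \<and> (\<integral>x. \<bar>x\<bar> \<partial>\<mu>) \<le> 1 \<and>
     (\<forall>t>0. measure \<mu> {x. \<bar>x\<bar> \<ge> t} \<le> 2 * exp (- t\<^sup>2 / 2))"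

definition bs_entry_law :: "real \<Rightarrow> real measure \<Rightarrow> real measure" where
  "bs_entry_law \<theta> \<mu> =
     distr (measure_pmf (bernoulli_pmf \<theta>) \<Otimes>\<^sub>M \<mu>) borel
       (\<lambda>(b, x). (if b then 1 else 0) * x)"

definition bs_matrix :: "nat \<Rightarrow> nat \<Rightarrow> real \<Rightarrow> real measure \<Rightarrow> (nat \<times> nat \<Rightarrow> real) measure" where
  "bs_matrix n p \<theta> \<mu> = PiM ({..<n} \<times> {..<p}) (\<lambda>_. bs_entry_law \<theta> \<mu>)"

definition col_support :: "nat \<Rightarrow> (nat \<times> nat \<Rightarrow> real) \<Rightarrow> nat \<Rightarrow> nat set" where
  "col_support n X j = {i. i < n \<and> X (i, j) \<noteq> 0}"

definition aligned_cols :: "nat \<Rightarrow> (nat \<times> nat \<Rightarrow> real) \<Rightarrow> nat set \<Rightarrow> bool" where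
  "aligned_cols n X J \<longleftrightarrow>
     (\<forall>j\<in>J. card (col_support n X j) > 1) \<and>
     (\<forall>j\<in>J. \<forall>k\<in>J. col_support n X j = col_support n X k)"

definition three_aligned :: "nat \<Rightarrow> nat \<Rightarrow> (nat \<times> nat \<Rightarrow> real) \<Rightarrow> bool" where
  "three_aligned n p X \<longleftrightarrow>
     (\<exists>j1 j2 j3. j1 < p \<and> j2 < p \<and> j3 < p \<and> j1 \<noteq> j2 \<and> j1 \<noteq> j3 \<and> j2 \<noteq> j3 \<and>
        aligned_cols n X {j1, j2, j3})"

end

theory Submission imports Defs "HOL-Real_Asymp.Real_Asymp" begin

lemma entry_facts:
  assumes mu: "subgaussian_law \<mu>" and t: "0 \<le> \<theta>" "\<theta> \<le> 1"
  shows "prob_space (bs_entry_law \<theta> \<mu>)" "sets (bs_entry_law \<theta> \<mu>) = sets borel"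
    "measure (bs_entry_law \<theta> \<mu>) {y. y \<noteq> 0} \<le> \<theta>"
proof -
  interpret m: prob_space \<mu> using mu by (simp add: subgaussian_law_def)
  have sm: "sets \<mu> = sets borel" using mu by (simp add: subgaussian_law_def)
  interpret pp: pair_prob_space "measure_pmf (bernoulli_pmf \<theta>)" \<mu>
    by (simp add: pair_prob_space_def pair_sigma_finite_def prob_space_measure_pmf m.prob_space_axioms
        prob_space_imp_sigma_finite)
  have meas: "(\<lambda>(b, x). (if b then 1 else 0) * x) \<in> borel_measurable (measure_pmf (bernoulli_pmf \<theta>) \<Otimes>\<^sub>M \<mu>)"
    using sm by measurable
  show "prob_space (bs_entry_law \<theta> \<mu>)" unfolding bs_entry_law_def
    by (rule pp.prob_space_distr[OF meas])
  show "sets (bs_entry_law \<theta> \<mu>) = sets borel" unfolding bs_entry_law_def by simp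
  have "measure (bs_entry_law \<theta> \<mu>) {y. y \<noteq> 0} =
     measure (measure_pmf (bernoulli_pmf \<theta>) \<Otimes>\<^sub>M \<mu>) ((\<lambda>(b, x). (if b then 1 else 0) * x) -` {y. y \<noteq> 0} \<inter> space (measure_pmf (bernoulli_pmf \<theta>) \<Otimes>\<^sub>M \<mu>))"
    unfolding bs_entry_law_def by (rule measure_distr[OF meas]) auto
  also have "\<dots> \<le> measure (measure_pmf (bernoulli_pmf \<theta>) \<Otimes>\<^sub>M \<mu>) ({True} \<times> space \<mu>)"
    by (rule pp.P.finite_measure_mono) (auto simp: space_pair_measure split: if_splits)
  also have "\<dots> = measure (measure_pmf (bernoulli_pmf \<theta>)) {True} * measure \<mu> (space \<mu>)"
  proof -
    have "emeasure (measure_pmf (bernoulli_pmf \<theta>) \<Otimes>\<^sub>M \<mu>) ({True} \<times> space \<mu>)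
       = emeasure (measure_pmf (bernoulli_pmf \<theta>)) {True} * emeasure \<mu> (space \<mu>)"
      by (rule m.emeasure_pair_measure_Times) auto
    then show ?thesis
      by (simp add: pp.emeasure_eq_measure m.emeasure_eq_measure measure_pmf.emeasure_eq_measure ennreal_mult''[symmetric])
  qed
  also have "\<dots> = \<theta>" using t by (simp add: measure_pmf_single m.prob_space)
  finally show "measure (bs_entry_law \<theta> \<mu>) {y. y \<noteq> 0} \<le> \<theta>" .
qed

lemma matrix_bound:
  assumes mu: "subgaussian_law \<mu>" and t: "0 \<le> \<theta>" "\<theta> \<le> 1"
  shows "measure (bs_matrix n p \<theta> \<mu>) {X \<in> space (bs_matrix n p \<theta> \<mu>). three_aligned n p X}
         \<le> real (p^3 * n^2) * \<theta>^6"
proof -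
  define Me where "Me = bs_entry_law \<theta> \<mu>"
  define I where "I = {..<n} \<times> {..<p}"
  define M where "M = bs_matrix n p \<theta> \<mu>"
  have MI: "M = PiM I (\<lambda>_. Me)" unfolding M_def I_def Me_def bs_matrix_def by simp
  interpret e: prob_space Me using entry_facts[OF mu t] by (simp add: Me_def)
  have setsMe: "sets Me = sets borel" using entry_facts[OF mu t] by (simp add: Me_def)
  have nz: "measure Me {y. y \<noteq> 0} \<le> \<theta>" using entry_facts[OF mu t] by (simp add: Me_def)
  have nzs: "{y::real. y \<noteq> 0} \<in> sets Me" unfolding setsMe by simp
  interpret P: product_prob_space "\<lambda>_. Me" I by unfold_locales
  define K where "K = (\<lambda>(j1::nat,j2::nat,j3::nat,i::nat,i'::nat). {(i,j1),(i',j1),(i,j2),(i',j2),(i,j3),(i',j3)})"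
  define T where "T = {(j1,j2,j3,i,i'). j1<p \<and> j2<p \<and> j3<p \<and> i<n \<and> i'<n \<and> j1\<noteq>j2 \<and> j1\<noteq>j3 \<and> j2\<noteq>j3 \<and> i\<noteq>i'}"
  define A where "A = (\<lambda>t. {X \<in> space M. \<forall>e\<in>K t. X e \<in> {y. y \<noteq> 0}})"
  have Tsub: "T \<subseteq> {..<p} \<times> {..<p} \<times> {..<p} \<times> {..<n} \<times> {..<n}" unfolding T_def by auto
  have finT: "finite T" by (rule finite_subset[OF Tsub]) simp
  have cardT: "card T \<le> p^3 * n^2"
  proof -
    have "card T \<le> card ({..<p} \<times> {..<p} \<times> {..<p} \<times> {..<n} \<times> {..<n})"
      by (rule card_mono[OF _ Tsub]) simp
    also have "\<dots> = p^3 * n^2" by (simp add: card_cartesian_product power3_eq_cube power2_eq_square)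
    finally show ?thesis .
  qed
  have KI: "K t \<subseteq> I" if "t \<in> T" for t using that unfolding K_def T_def I_def by auto
  have cardK: "card (K t) = 6" if "t \<in> T" for t using that unfolding K_def T_def by auto
  have finK: "finite (K t)" for t unfolding K_def by (auto split: prod.splits)
  have Aeq: "emeasure M (A t) = (\<Prod>e\<in>K t. emeasure Me {y. y \<noteq> 0})" if "t \<in> T" for t
    unfolding A_def MI using P.emeasure_PiM_Collect[OF KI[OF that] finK, of "\<lambda>_. {y. y \<noteq> 0}"] nzs
    by simp
  have Ameas: "measure M (A t) \<le> \<theta>^6" if "t \<in> T" for t
  proof -
    have "measure M (A t) = (\<Prod>e\<in>K t. measure Me {y. y \<noteq> 0})"
    proof -
      have "ennreal (measure M (A t)) = ennreal (\<Prod>e\<in>K t. measure Me {y. y \<noteq> 0})"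
        using Aeq[OF that] unfolding MI
        by (simp add: P.emeasure_eq_measure e.emeasure_eq_measure prod_ennreal measure_nonneg prod_nonneg ennreal_power)
      then show ?thesis by (rule ennreal_inj[THEN iffD1, rotated 2]) (auto intro: prod_nonneg)
    qed
    also have "\<dots> = measure Me {y. y \<noteq> 0} ^ 6" using cardK[OF that] by simp
    also have "\<dots> \<le> \<theta>^6" by (rule power_mono[OF nz measure_nonneg])
    finally show ?thesis .
  qed
  have Asets: "A t \<in> sets M" if "t \<in> T" for t
  proof -
    have "A t = (\<Inter>e\<in>K t. {X \<in> space M. X e \<in> {y. y \<noteq> 0}}) \<inter> space M" unfolding A_def by auto
    also have "\<dots> \<in> sets M"
    proof (cases "K t = {}")
      case True then show ?thesis by simp
    next
      case False
      have "(\<Inter>e\<in>K t. {X \<in> space M. X e \<in> {y. y \<noteq> 0}}) \<in> sets M"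
      proof (rule sets.finite_INT[OF finK False])
        fix e assume "e \<in> K t"
        show "{X \<in> space M. X e \<in> {y. y \<noteq> 0}} \<in> sets M"
        proof (cases "e \<in> I")
          case True
          show ?thesis unfolding MI using True nzs by measurable
        next
          case False
          then show ?thesis using KI[OF that] \<open>e \<in> K t\<close> by blast
        qed
      qed
      then show ?thesis by simp
    qed
    finally show ?thesis .
  qed
  have sub: "{X \<in> space M. three_aligned n p X} \<subseteq> (\<Union>t\<in>T. A t)"
  proof
    fix X assume "X \<in> {X \<in> space M. three_aligned n p X}"
    then have X: "X \<in> space M" and ta: "three_aligned n p X" by auto
    from ta obtain j1 j2 j3 where j: "j1 < p" "j2 < p" "j3 < p" "j1 \<noteq> j2" "j1 \<noteq> j3" "j2 \<noteq> j3"
      and al: "aligned_cols n X {j1, j2, j3}" unfolding three_aligned_def by blast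
    have a1: "\<forall>j\<in>{j1,j2,j3}. card (col_support n X j) > 1"
      and a2: "\<forall>j\<in>{j1,j2,j3}. \<forall>k\<in>{j1,j2,j3}. col_support n X j = col_support n X k"
      using al unfolding aligned_cols_def by blast+
    have c1: "card (col_support n X j1) > 1" using a1 by blast
    have e2: "col_support n X j2 = col_support n X j1" using a2 by blast
    have e3: "col_support n X j3 = col_support n X j1" using a2 by blast
    have fin1: "finite (col_support n X j1)" using c1 card_ge_0_finite by (metis less_trans zero_less_one)
    have "\<not> (\<forall>x\<in>col_support n X j1. \<forall>y\<in>col_support n X j1. x = y)"
      using card_le_Suc0_iff_eq[OF fin1] c1 by simp
    then obtain i i' where ii: "i \<in> col_support n X j1" "i' \<in> col_support n X j1" "i \<noteq> i'"
      by blast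
    have s2: "i \<in> col_support n X j2" "i' \<in> col_support n X j2" using ii e2 by simp_all
    have s3: "i \<in> col_support n X j3" "i' \<in> col_support n X j3" using ii e3 by simp_all
    have "(j1,j2,j3,i,i') \<in> T" using j ii unfolding T_def col_support_def by simp
    moreover have "X \<in> A (j1,j2,j3,i,i')" using X ii s2 s3 unfolding A_def K_def col_support_def
      by simp
    ultimately show "X \<in> (\<Union>t\<in>T. A t)" by blast
  qed
  have "measure M {X \<in> space M. three_aligned n p X} \<le> measure M (\<Union>t\<in>T. A t)"
    by (rule P.finite_measure_mono[unfolded MI[symmetric]]) (use sub finT Asets in auto)
  also have "\<dots> \<le> (\<Sum>t\<in>T. measure M (A t))"
    by (rule P.finite_measure_subadditive_finite[unfolded MI[symmetric]]) (use finT Asets in auto)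
  also have "\<dots> \<le> (\<Sum>t\<in>T. \<theta>^6)" by (rule sum_mono) (rule Ameas)
  also have "\<dots> = real (card T) * \<theta>^6" by simp
  also have "\<dots> \<le> real (p^3 * n^2) * \<theta>^6"
  proof (rule mult_right_mono)
    show "real (card T) \<le> real (p^3 * n^2)" using cardT by (simp only: of_nat_le_iff)
    show "0 \<le> \<theta>^6" using t by simp
  qed
  finally show ?thesis unfolding M_def .
qed

theorem mainTheorem10:
  fixes c C :: real and p :: "nat \<Rightarrow> nat" and \<mu> :: "nat \<Rightarrow> real measure"
  assumes "c > 0" and "C > 0"
    and "\<forall>\<^sub>F n in sequentially. real (p n) \<le> C * real n * ln (real n)"
    and "\<And>n. subgaussian_law (\<mu> n)"
  shows "(\<lambda>n. measure (bs_matrix n (p n) (c / real n) (\<mu> n))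
                {X \<in> space (bs_matrix n (p n) (c / real n) (\<mu> n)). three_aligned n (p n) X})
         \<longlonglongrightarrow> 0"
proof (rule tendsto_sandwich[of "\<lambda>_. 0" _ _ "\<lambda>n. C^3 * c^6 * (ln (real n)^3 / real n)"])
  show "\<forall>\<^sub>F n in sequentially. 0 \<le> measure (bs_matrix n (p n) (c / real n) (\<mu> n))
                {X \<in> space (bs_matrix n (p n) (c / real n) (\<mu> n)). three_aligned n (p n) X}"
    by (simp add: measure_nonneg)
  show "(\<lambda>_. 0) \<longlonglongrightarrow> (0::real)" by simp
  have "(\<lambda>n. ln (real n)^3 / real n) \<longlonglongrightarrow> 0" by real_asymp
  then show "(\<lambda>n. C^3 * c^6 * (ln (real n)^3 / real n)) \<longlonglongrightarrow> 0"
    by (rule tendsto_mult_right_zero)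
  have ev: "\<forall>\<^sub>F n in sequentially. c \<le> real n \<and> 1 \<le> n"
    using eventually_ge_at_top[of "nat \<lceil>c\<rceil> + 1"]
  proof eventually_elim
    case (elim n)
    have "c \<le> real (nat \<lceil>c\<rceil>)" by linarith
    then show ?case using elim by linarith
  qed
  show "\<forall>\<^sub>F n in sequentially. measure (bs_matrix n (p n) (c / real n) (\<mu> n))
                {X \<in> space (bs_matrix n (p n) (c / real n) (\<mu> n)). three_aligned n (p n) X}
        \<le> C^3 * c^6 * (ln (real n)^3 / real n)"
    using ev assms(3)
  proof eventually_elim
    case (elim n)
    have n1: "1 \<le> real n" using elim by simp
    have t0: "0 \<le> c / real n" using assms(1) n1 by simp
    have t1: "c / real n \<le> 1" using elim n1 by (simp add: divide_le_eq_1)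
    have "measure (bs_matrix n (p n) (c / real n) (\<mu> n))
                {X \<in> space (bs_matrix n (p n) (c / real n) (\<mu> n)). three_aligned n (p n) X}
          \<le> real (p n ^ 3 * n^2) * (c / real n)^6"
      by (rule matrix_bound[OF assms(4) t0 t1])
    also have "\<dots> = real (p n) ^ 3 * (real n^2 * (c / real n)^6)" by simp
    also have "\<dots> \<le> (C * real n * ln (real n)) ^ 3 * (real n^2 * (c / real n)^6)"
      by (rule mult_right_mono[OF power_mono]) (use elim t0 in auto)
    also have "\<dots> = C^3 * c^6 * (ln (real n)^3 / real n)"
      using n1 by (simp add: field_simps power2_eq_square eval_nat_numeral)
    finally show ?case .
  qed
qed
end
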